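(* Let $X=(x_{ij})$ be a $q$-generic $n\times d$ matrix and work in the algebra $K_q\langle x_{ij}\rangle/(\text{$q$-generic relations})$. Let $1\le r\le d$, let $I=(i_1<i_2<\cdots<i_{d+r})$ be an increasing tuple of elements of $[n]$, and let $J=(j_1,\dots,j_{d-r})$ be a tuple of elements of $[n]$. For $1\le s\le d+r$ let $I_{(s)}$ denote $I$ with $i_s$ removed. All subsets of $I$ are listed in increasing order. Then $$\sum_{s=1}^{d+r}(-q)^{2(r-1)-\ell(I_{(s)}|i_{s})}\sum_{\substack{\Lambda'\subseteq I_{(s)}\\ |\Lambda'|=r-1}}(-q)^{-\ell(I_{(s)}\setminus\Lambda'\,|\,\Lambda')}\big[I_{(s)}\setminus\Lambda'\big]\big[\Lambda'|i_{s}|J\big] =\Big(\sum_{t=0}^{r-1}q^{2t}\Big)\sum_{\substack{\Lambda\subseteq I\\ |\Lambda|=r}}(-q)^{-\ell(I\setminus\Lambda|\Lambda)}\big[I\setminus\Lambda\big]\big[\Lambda|J\big].$$ In particular, the Young symmetry expression for $(I,J)$ with parameter $r$ is a $K_q$-linear combination of Young symmetry expressions with parameter $r-1$ (for the pairs $(I_{(s)},(i_s,J))$), up to the scalar factor $\sum_{t=0}^{r-1}q^{2t}$.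
   Context: $K_q$ is a field of characteristic $0$ with a distinguished element $q\neq0$ that is not a root of unity. An $n\times m$ matrix $X=(x_{ij})$ is $q$-generic if its entries satisfy, for all $i<j$ and $k<l$: $x_{kj}x_{ki}=q\,x_{ki}x_{kj}$; $x_{jk}x_{ik}=q\,x_{ik}x_{jk}$; $x_{jk}x_{il}=x_{il}x_{jk}$; $x_{jl}x_{ik}=x_{ik}x_{jl}+(q-q^{-1})x_{il}x_{jk}$. For a square matrix $A=(a_{ij})$ of size $m$, the quantum determinant is $\det_qA=\sum_{\sigma\in S_m}(-q)^{-\ell(\sigma)}a_{1\sigma1}a_{2\sigma2}\cdots a_{m\sigma m}$. For a tuple $K=(k_1,\dots,k_m)$ of elements of $[n]$ (with $m$ at most the number of columns), $[K]$ denotes $\det_q$ of the $m\times m$ matrix whose $t$-th row is $(x_{k_t1},\dots,x_{k_tm})$. For tuples $A,B,\dots$, $A|B$ denotes their concatenation and $[A|B]$ the corresponding quantum minor. For a tuple $(a_1,\dots,a_m)$ of distinct integers, $\ell(a_1,\dots,a_m)$ is its number of inversions, i.e. the number of pairs $u<v$ with $a_u>a_v$ (the minimal number of adjacent swaps needed to sort it). *)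

theory Defs
  imports "HOL-Combinatorics.Permutations"
begin

definition ninv :: "nat list \<Rightarrow> nat" where
  "ninv xs = card {(u, v). u < v \<and> v < length xs \<and> xs ! v < xs ! u}"

text \<open>emb makes the ring 'a an algebra over the field 'k (central unital ring homomorphism).\<close>
definition is_algebra_emb :: "('k::field \<Rightarrow> 'a::ring_1) \<Rightarrow> bool" where
  "is_algebra_emb emb \<longleftrightarrow> emb 1 = 1 \<and> (\<forall>a b. emb (a + b) = emb a + emb b)
     \<and> (\<forall>a b. emb (a * b) = emb a * emb b) \<and> (\<forall>a y. emb a * y = y * emb a)"

definition q_generic :: "('k::field \<Rightarrow> 'a::ring_1) \<Rightarrow> 'k \<Rightarrow> (nat \<Rightarrow> nat \<Rightarrow> 'a) \<Rightarrow> nat \<Rightarrow> nat \<Rightarrow> bool" where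
  "q_generic emb q x n d \<longleftrightarrow>
     (\<forall>k i j. k \<in> {1..n} \<and> 1 \<le> i \<and> i < j \<and> j \<le> d \<longrightarrow> x k j * x k i = emb q * x k i * x k j) \<and>
     (\<forall>i j k. 1 \<le> i \<and> i < j \<and> j \<le> n \<and> k \<in> {1..d} \<longrightarrow> x j k * x i k = emb q * x i k * x j k) \<and>
     (\<forall>i j k l. 1 \<le> i \<and> i < j \<and> j \<le> n \<and> 1 \<le> k \<and> k < l \<and> l \<le> d \<longrightarrow>
        x j k * x i l = x i l * x j k \<and>
        x j l * x i k = x i k * x j l + emb (q - inverse q) * x i l * x j k)"

text \<open>Quantum minor [K]: quantum determinant of the matrix whose t-th row is (x_{k_t 1},...,x_{k_t m}).\<close>
definition qminor :: "('k::field \<Rightarrow> 'a::ring_1) \<Rightarrow> 'k \<Rightarrow> (nat \<Rightarrow> nat \<Rightarrow> 'a) \<Rightarrow> nat list \<Rightarrow> 'a" where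
  "qminor emb q x K =
     (\<Sum>\<sigma> \<in> {\<sigma>. \<sigma> permutes {..<length K}}.
        emb ((- q) powi (- int (ninv (map \<sigma> [0..<length K]))))
        * prod_list (map (\<lambda>t. x (K ! t) (\<sigma> t + 1)) [0..<length K]))"

end

theory Submission imports Defs begin

definition tp :: "nat \<Rightarrow> nat \<Rightarrow> nat" where
  "tp p w = (if w = p then Suc p else if w = Suc p then p else w)"

lemma ninv_swap:
  fixes xs :: "nat list"
  assumes "Suc p < length xs" "xs ! p < xs ! Suc p"
  shows "ninv (xs[p := xs ! Suc p, Suc p := xs ! p]) = Suc (ninv xs)"
proof -
  let ?ys = "xs[p := xs ! Suc p, Suc p := xs ! p]"
  define Inv where "Inv zs = {(u, v). u < v \<and> v < length zs \<and> zs ! v < zs ! u}" for zs :: "nat list"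
  have ys: "w < length xs \<Longrightarrow> ?ys ! w = xs ! tp p w" for w
    using assms by (auto simp: tp_def nth_list_update)
  have len: "length ?ys = length xs" by simp
  let ?g = "\<lambda>(u, v). (tp p u, tp p v)"
  have "Inv ?ys = insert (p, Suc p) (?g ` Inv xs)"
  proof (rule set_eqI, rule iffI)
    fix z assume z: "z \<in> Inv ?ys"
    obtain u v where uv: "z = (u, v)" by force
    show "z \<in> insert (p, Suc p) (?g ` Inv xs)"
    proof (cases "z = (p, Suc p)")
      case False
      have "(tp p u, tp p v) \<in> Inv xs"
        using z False uv ys[of u] ys[of v] assms unfolding Inv_def by (auto simp: tp_def split: if_splits)
      moreover have "z = ?g (tp p u, tp p v)" using uv by (auto simp: tp_def)
      ultimately show ?thesis by blast
    qed simp
  next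
    fix z assume z: "z \<in> insert (p, Suc p) (?g ` Inv xs)"
    show "z \<in> Inv ?ys"
    proof (cases "z = (p, Suc p)")
      case True thus ?thesis using assms ys[of p] ys[of "Suc p"] unfolding Inv_def by (auto simp: tp_def)
    next
      case False
      then obtain u v where uv: "(u,v) \<in> Inv xs" "z = (tp p u, tp p v)" using z by auto
      have "(u, v) \<noteq> (p, Suc p)" using uv assms unfolding Inv_def by auto
      then show ?thesis using uv ys[of "tp p u"] ys[of "tp p v"] assms unfolding Inv_def
        by (auto simp: tp_def split: if_splits)
    qed
  qed
  moreover have "(p, Suc p) \<notin> ?g ` Inv xs"
  proof
    assume "(p, Suc p) \<in> ?g ` Inv xs"
    then obtain u v where "(u,v) \<in> Inv xs" "(p, Suc p) = (tp p u, tp p v)" by auto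
    then show False unfolding Inv_def by (auto simp: tp_def split: if_splits)
  qed
  moreover have "inj_on ?g (Inv xs)"
    by (auto simp: inj_on_def tp_def split: if_splits)
  moreover have "finite (Inv xs)"
    by (rule finite_subset[of _ "{..<length xs} \<times> {..<length xs}"]) (auto simp: Inv_def)
  ultimately have "card (Inv ?ys) = Suc (card (Inv xs))"
    by (simp add: card_image)
  then show ?thesis by (simp add: ninv_def Inv_def)
qed

lemma emb_central:
  assumes "is_algebra_emb emb" shows "emb a * y = y * emb a"
  using assms unfolding is_algebra_emb_def by blast

lemma emb_props:
  assumes "is_algebra_emb emb"
  shows "emb (a + b) = emb a + emb b" "emb (a * b) = emb a * emb b" "emb 1 = 1" "emb 0 = 0"
proof -
  show "emb (a + b) = emb a + emb b" "emb (a * b) = emb a * emb b" "emb 1 = 1"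
    using assms unfolding is_algebra_emb_def by blast+
  have "emb (0 + 0) = emb 0 + emb 0" using assms unfolding is_algebra_emb_def by blast
  then show "emb 0 = 0" by simp
qed

lemma upt_split3:
  assumes "Suc p < m"
  shows "[0..<m] = [0..<p] @ p # Suc p # [Suc (Suc p)..<m]"
proof -
  have "[0..<m] = [0..<p] @ [p..<m]"
    using upt_add_eq_append[of 0 p "m - p"] assms by simp
  also have "[p..<m] = p # Suc p # [Suc (Suc p)..<m]"
    using assms by (simp add: upt_conv_Cons)
  finally show ?thesis .
qed

lemma local_ident:
  assumes emb: "is_algebra_emb emb" and qg: "q_generic emb q x n d" and q0: "q \<noteq> 0"
    and ab: "1 \<le> a" "a < b" "b \<le> n" and ce: "1 \<le> c" "c < e" "e \<le> d"
  shows "x b c * x a e + emb ((- q) powi (-1)) * (x b e * x a c) =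
         emb ((- q) powi (-1)) * (x a c * x b e) + emb ((- q) powi (-1)) * (emb ((- q) powi (-1)) * (x a e * x b c))"
proof -
  let ?E = "emb ((- q) powi (-1))" and ?F = "emb (q - inverse q)"
  have r1: "x b c * x a e = x a e * x b c" and r2: "x b e * x a c = x a c * x b e + ?F * x a e * x b c"
  proof -
    have "\<forall>i j k l. 1 \<le> i \<and> i < j \<and> j \<le> n \<and> 1 \<le> k \<and> k < l \<and> l \<le> d \<longrightarrow>
        x j k * x i l = x i l * x j k \<and>
        x j l * x i k = x i k * x j l + emb (q - inverse q) * x i l * x j k"
      using qg unfolding q_generic_def by blast
    then have "x b c * x a e = x a e * x b c \<and> x b e * x a c = x a c * x b e + ?F * x a e * x b c"
      using ab ce by blast
    then show "x b c * x a e = x a e * x b c" "x b e * x a c = x a c * x b e + ?F * x a e * x b c" by auto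
  qed
  have sc: "1 + ((- q) powi (-1)) * (q - inverse q) = ((- q) powi (-1)) * ((- q) powi (-1))"
    using q0 by (simp add: power_int_minus field_simps)
  have "x b c * x a e + ?E * (x b e * x a c)
      = ?E * (x a c * x b e) + (x a e * x b c + ?E * (?F * (x a e * x b c)))"
    by (simp add: r1 r2 distrib_left mult.assoc add_ac)
  also have "x a e * x b c + ?E * (?F * (x a e * x b c)) = emb (1 + ((- q) powi (-1)) * (q - inverse q)) * (x a e * x b c)"
    by (simp only: emb_props[OF emb] distrib_right mult_1_left mult.assoc)
  also have "\<dots> = ?E * (?E * (x a e * x b c))"
    by (simp only: sc emb_props[OF emb] mult.assoc)
  finally show ?thesis .
qed

lemma sum_perm_pair:
  fixes f :: "(nat \<Rightarrow> nat) \<Rightarrow> 'a::comm_monoid_add"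
  assumes "Suc p < m"
  shows "(\<Sum>\<sigma>\<in>{\<sigma>. \<sigma> permutes {..<m}}. f \<sigma>) =
    (\<Sum>\<sigma>\<in>{\<sigma>. \<sigma> permutes {..<m} \<and> \<sigma> p < \<sigma> (Suc p)}. f \<sigma> + f (\<sigma> \<circ> transpose p (Suc p)))"
proof -
  let ?P = "{\<sigma>. \<sigma> permutes {..<m}}" and ?A = "{\<sigma>. \<sigma> permutes {..<m} \<and> \<sigma> p < \<sigma> (Suc p)}"
  let ?t = "transpose p (Suc p)"
  have fin: "finite ?P" by (simp add: finite_permutations)
  have tp: "?t permutes {..<m}" using assms by (intro permutes_swap_id) auto
  have "(\<Sum>\<sigma>\<in>?P. f \<sigma>) = (\<Sum>\<sigma>\<in>?A. f \<sigma>) + (\<Sum>\<sigma>\<in>?P - ?A. f \<sigma>)"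
    using fin by (metis (no_types, lifting) Diff_subset mem_Collect_eq subsetI sum.subset_diff add.commute)
  moreover have "(\<Sum>\<sigma>\<in>?A. f (\<sigma> \<circ> ?t)) = (\<Sum>\<sigma>\<in>?P - ?A. f \<sigma>)"
  proof (rule sum.reindex_bij_witness[of _ "\<lambda>\<sigma>. \<sigma> \<circ> ?t" "\<lambda>\<sigma>. \<sigma> \<circ> ?t"])
    fix s assume s: "s \<in> ?A"
    show "s \<circ> ?t \<circ> ?t = s" by (simp add: comp_assoc)
    show "s \<circ> ?t \<in> ?P - ?A" using s tp by (auto intro: permutes_compose simp: transpose_def)
  next
    fix s assume s: "s \<in> ?P - ?A"
    show "s \<circ> ?t \<circ> ?t = s" by (simp add: comp_assoc)
    have "inj s" using s permutes_inj by blast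
    then have "s p \<noteq> s (Suc p)" by (simp add: inj_eq)
    then show "s \<circ> ?t \<in> ?A" using s tp by (auto intro: permutes_compose simp: transpose_def)
  qed simp
  ultimately show ?thesis by (simp add: sum.distrib)
qed

lemma map_comp_transpose:
  assumes "Suc p < m"
  shows "map (\<sigma> \<circ> transpose p (Suc p)) [0..<m] = (map \<sigma> [0..<m])[p := \<sigma> (Suc p), Suc p := \<sigma> p]"
  using assms by (intro nth_equalityI) (auto simp: nth_list_update transpose_def)

lemma qminor_swap:
  assumes emb: "is_algebra_emb emb" and qg: "q_generic emb q x n d" and q0: "q \<noteq> 0"
    and ab: "1 \<le> a" "a < b" "b \<le> n" and len: "length (P @ [a, b] @ R) \<le> d"
  shows "qminor emb q x (P @ [b, a] @ R) = emb ((- q) powi (-1)) * qminor emb q x (P @ [a, b] @ R)"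
proof -
  define K where "K = P @ [a, b] @ R"
  define K' where "K' = P @ [b, a] @ R"
  define m where "m = length K"
  define p where "p = length P"
  define t where "t = transpose p (Suc p)"
  define E where "E = emb ((- q) powi (-1))"
  have mK': "length K' = m" by (simp add: K_def K'_def m_def)
  have pm: "Suc p < m" by (simp add: m_def K_def p_def)
  have md: "m \<le> d" using len by (simp add: m_def K_def)
  define w where "w \<sigma> = emb ((- q) powi (- int (ninv (map \<sigma> [0..<m]))))" for \<sigma> :: "nat \<Rightarrow> nat"
  define T where "T L \<sigma> = prod_list (map (\<lambda>i. x (L ! i) (\<sigma> i + 1)) [0..<m])" for L \<sigma>
  define Pre where "Pre \<sigma> = prod_list (map (\<lambda>i. x (K ! i) (\<sigma> i + 1)) [0..<p])" for \<sigma> :: "nat \<Rightarrow> nat"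
  define Suf where "Suf \<sigma> = prod_list (map (\<lambda>i. x (K ! i) (\<sigma> i + 1)) [Suc (Suc p)..<m])" for \<sigma> :: "nat \<Rightarrow> nat"
  have qm: "qminor emb q x L = (\<Sum>\<sigma>\<in>{\<sigma>. \<sigma> permutes {..<m}}. w \<sigma> * T L \<sigma>)" if "length L = m" for L
    unfolding qminor_def w_def T_def that ..
  have Kp: "K ! p = a" "K ! Suc p = b" "K' ! p = b" "K' ! Suc p = a"
    by (simp_all add: K_def K'_def p_def nth_append)
  have Kpre: "i < p \<Longrightarrow> K' ! i = K ! i" for i by (simp add: K_def K'_def p_def nth_append)
  have Ksuf: "Suc (Suc p) \<le> i \<Longrightarrow> K' ! i = K ! i" for i by (simp add: K_def K'_def p_def nth_append)
  have Tsplit: "T L \<sigma> = prod_list (map (\<lambda>i. x (L ! i) (\<sigma> i + 1)) [0..<p]) *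
      (x (L ! p) (\<sigma> p + 1) * (x (L ! Suc p) (\<sigma> (Suc p) + 1) *
       prod_list (map (\<lambda>i. x (L ! i) (\<sigma> i + 1)) [Suc (Suc p)..<m])))" for L \<sigma>
    unfolding T_def by (subst upt_split3[OF pm]) simp
  have tpre: "i < p \<Longrightarrow> t i = i" for i by (simp add: t_def transpose_def)
  have tsuf: "Suc (Suc p) \<le> i \<Longrightarrow> t i = i" for i by (simp add: t_def transpose_def)
  have PreK': "prod_list (map (\<lambda>i. x (K' ! i) (\<sigma> i + 1)) [0..<p]) = Pre \<sigma>" for \<sigma>
    unfolding Pre_def by (intro arg_cong[where f=prod_list] map_cong) (auto simp: Kpre)
  have SufK': "prod_list (map (\<lambda>i. x (K' ! i) (\<sigma> i + 1)) [Suc (Suc p)..<m]) = Suf \<sigma>" for \<sigma>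
    unfolding Suf_def by (intro arg_cong[where f=prod_list] map_cong) (auto simp: Ksuf)
  have Pret: "Pre (\<sigma> \<circ> t) = Pre \<sigma>" for \<sigma>
    unfolding Pre_def by (intro arg_cong[where f=prod_list] map_cong) (auto simp: tpre)
  have Suft: "Suf (\<sigma> \<circ> t) = Suf \<sigma>" for \<sigma>
    unfolding Suf_def by (intro arg_cong[where f=prod_list] map_cong) (auto simp: tsuf)
  have tp: "t p = Suc p" "t (Suc p) = p" by (simp_all add: t_def)
  have key: "w \<sigma> * T K' \<sigma> + w (\<sigma> \<circ> t) * T K' (\<sigma> \<circ> t) = E * (w \<sigma> * T K \<sigma> + w (\<sigma> \<circ> t) * T K (\<sigma> \<circ> t))"
    if s: "\<sigma> permutes {..<m}" "\<sigma> p < \<sigma> (Suc p)" for \<sigma>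
  proof -
    define c where "c = \<sigma> p + 1"
    define e where "e = \<sigma> (Suc p) + 1"
    have ce: "1 \<le> c" "c < e" "e \<le> d"
    proof -
      have "\<sigma> (Suc p) \<in> {..<m}" using permutes_in_image[OF s(1), of "Suc p"] pm by simp
      then show "1 \<le> c" "c < e" "e \<le> d" using s(2) md by (auto simp: c_def e_def)
    qed
    have wt: "w (\<sigma> \<circ> t) = w \<sigma> * E"
    proof -
      have "ninv (map (\<sigma> \<circ> t) [0..<m]) = Suc (ninv (map \<sigma> [0..<m]))"
        unfolding t_def map_comp_transpose[OF pm] using ninv_swap[of p "map \<sigma> [0..<m]"] pm s(2) by simp
      then have "- int (ninv (map (\<sigma> \<circ> t) [0..<m])) = - int (ninv (map \<sigma> [0..<m])) + (-1)" by simp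
      moreover have "(- q) powi (- int (ninv (map \<sigma> [0..<m])) + (-1)) = (- q) powi (- int (ninv (map \<sigma> [0..<m]))) * (- q) powi (-1)"
        by (rule power_int_add) (simp add: q0)
      ultimately show ?thesis unfolding w_def E_def by (simp only: emb_props[OF emb])
    qed
    have T1: "T K \<sigma> = Pre \<sigma> * (x a c * (x b e * Suf \<sigma>))"
      unfolding Tsplit Kp Pre_def Suf_def c_def e_def ..
    have T2: "T K (\<sigma> \<circ> t) = Pre \<sigma> * (x a e * (x b c * Suf \<sigma>))"
      using Tsplit[of K "\<sigma> \<circ> t"] Pret[of \<sigma>] Suft[of \<sigma>] unfolding Pre_def Suf_def Kp c_def e_def
      by (simp add: tp)
    have T3: "T K' \<sigma> = Pre \<sigma> * (x b c * (x a e * Suf \<sigma>))"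
      unfolding Tsplit Kp PreK' SufK' c_def e_def ..
    have T4: "T K' (\<sigma> \<circ> t) = Pre \<sigma> * (x b e * (x a c * Suf \<sigma>))"
      using Tsplit[of K' "\<sigma> \<circ> t"] PreK' SufK' unfolding Kp c_def e_def
      by (simp add: tp Pret[unfolded comp_def] Suft[unfolded comp_def])
    have loc: "x b c * x a e + E * (x b e * x a c) = E * (x a c * x b e) + E * (E * (x a e * x b c))"
      unfolding E_def by (rule local_ident[OF emb qg q0 ab ce])
    have cen: "\<And>y. E * y = y * E" unfolding E_def by (rule emb_central[OF emb])
    have cen2: "\<And>z. Pre \<sigma> * (E * z) = E * (Pre \<sigma> * z)" "\<And>z. w \<sigma> * (E * z) = E * (w \<sigma> * z)"
      by (metis mult.assoc cen)+
    have "w \<sigma> * T K' \<sigma> + w (\<sigma> \<circ> t) * T K' (\<sigma> \<circ> t)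
        = w \<sigma> * (Pre \<sigma> * ((x b c * x a e + E * (x b e * x a c)) * Suf \<sigma>))"
      unfolding T3 T4 wt by (simp add: distrib_left distrib_right mult.assoc cen2)
    also have "\<dots> = w \<sigma> * (Pre \<sigma> * ((E * (x a c * x b e) + E * (E * (x a e * x b c))) * Suf \<sigma>))"
      unfolding loc ..
    also have "\<dots> = E * (w \<sigma> * T K \<sigma> + w (\<sigma> \<circ> t) * T K (\<sigma> \<circ> t))"
      unfolding T1 T2 wt by (simp add: distrib_left distrib_right mult.assoc cen2)
    finally show ?thesis .
  qed
  have "qminor emb q x K' = (\<Sum>\<sigma>\<in>{\<sigma>. \<sigma> permutes {..<m} \<and> \<sigma> p < \<sigma> (Suc p)}. w \<sigma> * T K' \<sigma> + w (\<sigma> \<circ> t) * T K' (\<sigma> \<circ> t))"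
    unfolding qm[OF mK'] t_def by (rule sum_perm_pair[OF pm])
  also have "\<dots> = (\<Sum>\<sigma>\<in>{\<sigma>. \<sigma> permutes {..<m} \<and> \<sigma> p < \<sigma> (Suc p)}. E * (w \<sigma> * T K \<sigma> + w (\<sigma> \<circ> t) * T K (\<sigma> \<circ> t)))"
    by (intro sum.cong refl) (simp add: key)
  also have "\<dots> = E * qminor emb q x K"
    unfolding qm[OF m_def[symmetric]] t_def sum_distrib_left[symmetric] by (rule arg_cong[where f="\<lambda>z. E * z"], rule sum_perm_pair[OF pm, symmetric])
  finally show ?thesis unfolding K_def K'_def E_def .
qed

lemma sl_eq:
  assumes "sorted_wrt (<) xs" "set xs = A"
  shows "sorted_list_of_set A = xs"
  using assms by (metis sorted_distinct_set_unique strict_sorted_iff sorted_sorted_list_of_set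
      distinct_sorted_list_of_set set_sorted_list_of_set List.finite_set)

lemma qminor_move:
  assumes emb: "is_algebra_emb emb" and qg: "q_generic emb q x n d" and q0: "q \<noteq> 0"
    and i: "1 \<le> i" and L: "\<forall>y\<in>set L. i < y \<and> y \<le> n" and len: "length (P @ L @ [i] @ S) \<le> d"
  shows "qminor emb q x (P @ L @ [i] @ S) = emb ((- q) powi (- int (length L))) * qminor emb q x (P @ [i] @ L @ S)"
  using L len
proof (induction L arbitrary: P)
  case Nil
  then show ?case by (simp add: emb_props[OF emb])
next
  case (Cons y L)
  have "qminor emb q x (P @ (y # L) @ [i] @ S) = qminor emb q x ((P @ [y]) @ L @ [i] @ S)" by simp
  also have "\<dots> = emb ((- q) powi (- int (length L))) * qminor emb q x ((P @ [y]) @ [i] @ L @ S)"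
    using Cons by (intro Cons.IH) auto
  also have "(P @ [y]) @ [i] @ L @ S = P @ [y, i] @ (L @ S)" by simp
  also have "qminor emb q x (P @ [y, i] @ (L @ S)) = emb ((- q) powi (-1)) * qminor emb q x (P @ [i, y] @ (L @ S))"
    using Cons.prems by (intro qminor_swap[OF emb qg q0 i]) auto
  also have "P @ [i, y] @ (L @ S) = P @ [i] @ (y # L) @ S" by simp
  also have "emb ((- q) powi (- int (length L))) * (emb ((- q) powi (-1)) * qminor emb q x (P @ [i] @ (y # L) @ S))
     = emb ((- q) powi (- int (length L)) * (- q) powi (-1)) * qminor emb q x (P @ [i] @ (y # L) @ S)"
    by (simp only: emb_props[OF emb] mult.assoc)
  also have "(- q) powi (- int (length L)) * (- q) powi (-1) = (- q) powi (- int (length (y # L)))"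
  proof -
    have "- int (length (y # L)) = - int (length L) + (-1)" by simp
    then show ?thesis using power_int_add[of "- q" "- int (length L)" "-1"] q0 by (simp only:) simp
  qed
  finally show ?case .
qed

lemma ninv_app:
  assumes A: "sorted_wrt (<) A" and B: "sorted_wrt (<) B"
  shows "ninv (A @ B) = card {(a, b). a \<in> set A \<and> b \<in> set B \<and> b < a}"
proof -
  define Z where "Z = {(u, w). u < length A \<and> w < length B \<and> B ! w < A ! u}"
  have dA: "distinct A" and dB: "distinct B" using A B by (auto simp: strict_sorted_iff)
  have 1: "{(u, v). u < v \<and> v < length (A @ B) \<and> (A @ B) ! v < (A @ B) ! u} = (\<lambda>(u, w). (u, length A + w)) ` Z"
  proof (rule set_eqI, rule iffI)
    fix z assume z: "z \<in> {(u, v). u < v \<and> v < length (A @ B) \<and> (A @ B) ! v < (A @ B) ! u}"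
    obtain u v where uv: "z = (u, v)" by force
    have "u < length A"
    proof (rule ccontr)
      assume "\<not> u < length A"
      then have "B ! (u - length A) < B ! (v - length A)"
        using z uv by (intro sorted_wrt_nth_less[OF B]) auto
      then show False using z uv \<open>\<not> u < length A\<close> by (auto simp: nth_append)
    qed
    moreover have "length A \<le> v"
    proof (rule ccontr)
      assume "\<not> length A \<le> v"
      then have "A ! u < A ! v"
        using z uv by (intro sorted_wrt_nth_less[OF A]) auto
      then show False using z uv \<open>\<not> length A \<le> v\<close> by (auto simp: nth_append)
    qed
    ultimately have "(u, v - length A) \<in> Z" "z = (\<lambda>(u, w). (u, length A + w)) (u, v - length A)"
      using z uv by (auto simp: Z_def nth_append)
    then show "z \<in> (\<lambda>(u, w). (u, length A + w)) ` Z" by blast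
  next
    fix z assume "z \<in> (\<lambda>(u, w). (u, length A + w)) ` Z"
    then show "z \<in> {(u, v). u < v \<and> v < length (A @ B) \<and> (A @ B) ! v < (A @ B) ! u}"
      by (auto simp: Z_def nth_append)
  qed
  have 2: "{(a, b). a \<in> set A \<and> b \<in> set B \<and> b < a} = (\<lambda>(u, w). (A ! u, B ! w)) ` Z"
  proof (rule set_eqI, rule iffI)
    fix z assume "z \<in> {(a, b). a \<in> set A \<and> b \<in> set B \<and> b < a}"
    then obtain u w where "u < length A" "w < length B" "z = (A ! u, B ! w)" "B ! w < A ! u"
      by (auto simp: in_set_conv_nth)
    then show "z \<in> (\<lambda>(u, w). (A ! u, B ! w)) ` Z" unfolding Z_def by force
  qed (auto simp: Z_def)
  have fZ: "finite Z" by (rule finite_subset[of _ "{..<length A} \<times> {..<length B}"]) (auto simp: Z_def)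
  have i1: "inj_on (\<lambda>(u, w). (u, length A + w)) Z" by (auto simp: inj_on_def)
  have i2: "inj_on (\<lambda>(u, w). (A ! u, B ! w)) Z"
    using dA dB by (auto simp: inj_on_def Z_def nth_eq_iff_index_eq)
  show ?thesis unfolding ninv_def 1 2 card_image[OF i1] card_image[OF i2] ..
qed

lemma emb_sum:
  assumes emb: "is_algebra_emb emb"
  shows "emb (sum f A) = (\<Sum>a\<in>A. emb (f a))"
proof (cases "finite A")
  case True then show ?thesis by (induction A rule: finite_induct) (auto simp: emb_props[OF emb])
qed (simp add: emb_props[OF emb])

lemma card_gt_single:
  fixes S :: "nat set"
  assumes "finite S"
  shows "card {(a, b). a \<in> S - {i} \<and> b \<in> {i} \<and> b < a} = card {y \<in> S. i < y}"
proof -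
  have "{(a, b). a \<in> S - {i} \<and> b \<in> {i} \<and> b < a} = (\<lambda>a. (a, i)) ` {y \<in> S. i < y}" by auto
  moreover have "inj_on (\<lambda>a. (a, i)) {y \<in> S. i < y}" by (auto simp: inj_on_def)
  ultimately show ?thesis by (simp add: card_image)
qed

lemma cc_split:
  fixes T L :: "nat set"
  assumes "finite T" "finite L" "i \<in> L" "i \<notin> T"
  shows "card {(a, b). a \<in> T \<and> b \<in> L \<and> b < a} = card {(a, b). a \<in> T \<and> b \<in> L - {i} \<and> b < a} + card {a \<in> T. i < a}"
proof -
  have "{(a, b). a \<in> T \<and> b \<in> L \<and> b < a} = {(a, b). a \<in> T \<and> b \<in> L - {i} \<and> b < a} \<union> (\<lambda>a. (a, i)) ` {a \<in> T. i < a}"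
    using assms by auto
  moreover have "finite {(a, b). a \<in> T \<and> b \<in> L - {i} \<and> b < a}"
    by (rule finite_subset[of _ "T \<times> L"]) (use assms in auto)
  moreover have "card ((\<lambda>a. (a, i)) ` {a \<in> T. i < a}) = card {a \<in> T. i < a}"
    by (rule card_image) (auto simp: inj_on_def)
  moreover have "finite ((\<lambda>a. (a, i)) ` {a \<in> T. i < a})" using assms by simp
  moreover have "{(a, b). a \<in> T \<and> b \<in> L - {i} \<and> b < a} \<inter> (\<lambda>a. (a, i)) ` {a \<in> T. i < a} = {}" by auto
  ultimately show ?thesis by (simp add: card_Un_disjoint)
qed

lemma point:
  assumes emb: "is_algebra_emb emb" and qg: "q_generic emb q x n d" and q0: "q \<noteq> 0"
    and fS: "finite S" and Sn: "S \<subseteq> {1..n}" and LS: "\<Lambda> \<subseteq> S" and cL: "card \<Lambda> = r" and iL: "i \<in> \<Lambda>"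
    and cS: "card S = d + r" and lJ: "length J = d - r" and Jn: "set J \<subseteq> {1..n}" and rd: "r \<le> d"
  shows "emb ((- q) powi (2 * (int r - 1) - int (ninv (sorted_list_of_set (S - {i}) @ [i])))) *
     (emb ((- q) powi (- int (ninv (sorted_list_of_set (S - {i} - (\<Lambda> - {i})) @ sorted_list_of_set (\<Lambda> - {i})))))
       * qminor emb q x (sorted_list_of_set (S - {i} - (\<Lambda> - {i})))
       * qminor emb q x (sorted_list_of_set (\<Lambda> - {i}) @ [i] @ J))
   = emb (q ^ (2 * card {y \<in> \<Lambda>. y < i}) * (- q) powi (- int (ninv (sorted_list_of_set (S - \<Lambda>) @ sorted_list_of_set \<Lambda>))))
     * (qminor emb q x (sorted_list_of_set (S - \<Lambda>)) * qminor emb q x (sorted_list_of_set \<Lambda> @ J))"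
proof -
  define T where "T = S - \<Lambda>"
  define P where "P = sorted_list_of_set {y \<in> \<Lambda>. y < i}"
  define L where "L = sorted_list_of_set {y \<in> \<Lambda>. i < y}"
  define h where "h = card {y \<in> \<Lambda>. y < i}"
  define g where "g = card {y \<in> \<Lambda>. i < y}"
  define gT where "gT = card {y \<in> T. i < y}"
  define cT where "cT = card {(a, b). a \<in> T \<and> b \<in> \<Lambda> - {i} \<and> b < a}"
  have fL: "finite \<Lambda>" using fS LS finite_subset by blast
  have fT: "finite T" using fS by (simp add: T_def)
  have ST: "S - {i} - (\<Lambda> - {i}) = T" using iL by (auto simp: T_def)
  have sP: "sorted_wrt (<) P" and sL: "sorted_wrt (<) L" by (simp_all add: P_def L_def)
  have setP: "set P = {y \<in> \<Lambda>. y < i}" and setL: "set L = {y \<in> \<Lambda>. i < y}"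
    using fL by (simp_all add: P_def L_def)
  have lenL: "length L = g" by (simp add: L_def g_def)
  have cross: "\<forall>x\<in>set P. \<forall>y\<in>set L. x < y" unfolding setP setL by auto
  have e1: "sorted_list_of_set (\<Lambda> - {i}) = P @ L"
  proof (rule sl_eq)
    show "sorted_wrt (<) (P @ L)" using sP sL cross by (simp add: sorted_wrt_append)
    show "set (P @ L) = \<Lambda> - {i}" unfolding set_append setP setL by auto
  qed
  have e2: "sorted_list_of_set \<Lambda> = P @ [i] @ L"
  proof (rule sl_eq)
    have "\<forall>x\<in>set P. x < i" "\<forall>y\<in>set L. i < y" unfolding setP setL by auto
    then show "sorted_wrt (<) (P @ [i] @ L)" using sP sL cross by (simp add: sorted_wrt_append)
    show "set (P @ [i] @ L) = \<Lambda>" unfolding set_append setP setL using iL by auto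
  qed
  have i1: "1 \<le> i" and in_: "i \<le> n" using iL LS Sn by auto
  have gh: "g + h = r - 1"
  proof -
    have "\<Lambda> - {i} = {y \<in> \<Lambda>. i < y} \<union> {y \<in> \<Lambda>. y < i}" by auto
    moreover have "card ({y \<in> \<Lambda>. i < y} \<union> {y \<in> \<Lambda>. y < i}) = g + h"
      unfolding g_def h_def using fL by (intro card_Un_disjoint) auto
    ultimately have "card (\<Lambda> - {i}) = g + h" by simp
    then show ?thesis using iL fL cL by simp
  qed
  have Qmove: "qminor emb q x (sorted_list_of_set (\<Lambda> - {i}) @ [i] @ J) =
      emb ((- q) powi (- int g)) * qminor emb q x (sorted_list_of_set \<Lambda> @ J)"
  proof -
    have "length (P @ L @ [i] @ J) = length (sorted_list_of_set \<Lambda>) + length J" using e2 by simp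
    also have "\<dots> = d" using cL lJ rd by simp
    finally have len: "length (P @ L @ [i] @ J) \<le> d" by simp
    have "\<forall>y\<in>set L. i < y \<and> y \<le> n" using setL LS Sn by auto
    then show ?thesis unfolding e1 e2 using qminor_move[OF emb qg q0 i1 _ len] lenL by simp
  qed
  have n1: "ninv (sorted_list_of_set (S - {i}) @ [i]) = gT + g"
  proof -
    have "ninv (sorted_list_of_set (S - {i}) @ [i]) = card {y \<in> S. i < y}"
      using ninv_app[of "sorted_list_of_set (S - {i})" "[i]"] card_gt_single[OF fS, of i] fS by simp
    also have "{y \<in> S. i < y} = {y \<in> T. i < y} \<union> {y \<in> \<Lambda>. i < y}" using LS by (auto simp: T_def)
    also have "card \<dots> = gT + g" unfolding gT_def g_def using fT fL by (subst card_Un_disjoint) (auto simp: T_def)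
    finally show ?thesis .
  qed
  have n2: "ninv (sorted_list_of_set T @ sorted_list_of_set (\<Lambda> - {i})) = cT"
    using ninv_app[of "sorted_list_of_set T" "sorted_list_of_set (\<Lambda> - {i})"] fT fL by (simp add: cT_def)
  have n3: "ninv (sorted_list_of_set T @ sorted_list_of_set \<Lambda>) = cT + gT"
    using ninv_app[of "sorted_list_of_set T" "sorted_list_of_set \<Lambda>"] fT fL cc_split[OF fT fL iL] iL
    by (simp add: cT_def gT_def T_def)
  have expo: "(2 * (int r - 1) - int (gT + g)) + (- int cT) + (- int g) = int (2 * h) + (- int (cT + gT))"
    using gh cL iL fL by (cases r) auto
  have pa: "(- q) powi (a + b) = (- q) powi a * (- q) powi b" for a b
    by (rule power_int_add) (simp add: q0)
  have scal: "(- q) powi (2 * (int r - 1) - int (gT + g)) * (- q) powi (- int cT) * (- q) powi (- int g)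
      = q ^ (2 * h) * (- q) powi (- int (cT + gT))"
  proof -
    have "(- q) powi (2 * (int r - 1) - int (gT + g)) * (- q) powi (- int cT) * (- q) powi (- int g)
        = (- q) powi ((2 * (int r - 1) - int (gT + g)) + (- int cT) + (- int g))"
      by (simp only: pa)
    also have "\<dots> = (- q) powi (int (2 * h)) * (- q) powi (- int (cT + gT))"
      unfolding expo by (simp only: pa)
    also have "(- q) powi (int (2 * h)) = q ^ (2 * h)" by (simp only: power_int_of_nat) (simp add: power_mult)
    finally show ?thesis .
  qed
  have cen: "qminor emb q x (sorted_list_of_set T) * (emb c * z) = emb c * (qminor emb q x (sorted_list_of_set T) * z)" for c z
    by (metis mult.assoc emb_central[OF emb])
  show ?thesis
    unfolding ST Qmove n1 n2 T_def[symmetric] n3 h_def[symmetric]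
    by (simp only: cen mult.assoc scal[symmetric] emb_props[OF emb])
qed

lemma Is_eq:
  assumes sI: "sorted_wrt (<) I" and k: "k < length I"
  shows "take k I @ drop (Suc k) I = sorted_list_of_set (set I - {I ! k})"
proof -
  have I: "I = take k I @ I ! k # drop (Suc k) I" using id_take_nth_drop[OF k] .
  have dI: "distinct I" using sI by (simp add: strict_sorted_iff)
  have s2: "sorted_wrt (<) (take k I @ I ! k # drop (Suc k) I)" using sI I by simp
  have d2: "distinct (take k I @ I ! k # drop (Suc k) I)" using dI I by simp
  show ?thesis
  proof (rule sl_eq[symmetric])
    show "sorted_wrt (<) (take k I @ drop (Suc k) I)" using s2 by (simp add: sorted_wrt_append)
    have "set I = set (take k I) \<union> {I ! k} \<union> set (drop (Suc k) I)" by (subst I) auto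
    then show "set (take k I @ drop (Suc k) I) = set I - {I ! k}" using d2 by auto
  qed
qed

lemma h_sum:
  fixes \<Lambda> :: "nat set" and f :: "nat \<Rightarrow> 'b::comm_monoid_add"
  assumes fL: "finite \<Lambda>" and cL: "card \<Lambda> = r"
  shows "(\<Sum>i\<in>\<Lambda>. f (card {y \<in> \<Lambda>. y < i})) = (\<Sum>t<r. f t)"
proof -
  define h where "h i = card {y \<in> \<Lambda>. y < i}" for i
  have mono: "h a < h b" if "a \<in> \<Lambda>" "b \<in> \<Lambda>" "a < b" for a b
    unfolding h_def using that fL by (intro psubset_card_mono) auto
  have inj: "inj_on h \<Lambda>"
  proof (rule inj_onI)
    fix a b assume "a \<in> \<Lambda>" "b \<in> \<Lambda>" "h a = h b"
    then show "a = b" using mono[of a b] mono[of b a] by (cases a b rule: linorder_cases) auto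
  qed
  have sub: "h ` \<Lambda> \<subseteq> {..<r}"
  proof
    fix z assume "z \<in> h ` \<Lambda>"
    then obtain i where i: "i \<in> \<Lambda>" "z = h i" by auto
    have "{y \<in> \<Lambda>. y < i} \<subset> \<Lambda>" using i by auto
    then have "h i < card \<Lambda>" unfolding h_def using fL by (rule psubset_card_mono[rotated])
    then show "z \<in> {..<r}" using i cL by simp
  qed
  have "h ` \<Lambda> = {..<r}"
    using sub card_image[OF inj] cL by (intro card_subset_eq) auto
  then have "bij_betw h \<Lambda> {..<r}" using inj by (simp add: bij_betw_def)
  then show ?thesis unfolding h_def[symmetric] by (rule sum.reindex_bij_betw)
qed

lemma swap_sums:
  fixes S :: "nat set" and F :: "nat \<Rightarrow> nat set \<Rightarrow> 'b::comm_monoid_add"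
  assumes fS: "finite S" and r: "1 \<le> r"
  shows "(\<Sum>i\<in>S. \<Sum>\<Lambda>'\<in>{\<Lambda>'. \<Lambda>' \<subseteq> S - {i} \<and> card \<Lambda>' = r - 1}. F i \<Lambda>')
       = (\<Sum>\<Lambda>\<in>{\<Lambda>. \<Lambda> \<subseteq> S \<and> card \<Lambda> = r}. \<Sum>i\<in>\<Lambda>. F i (\<Lambda> - {i}))"
proof -
  have fB: "finite {\<Lambda>'. \<Lambda>' \<subseteq> S - {i} \<and> card \<Lambda>' = r - 1}" for i
    by (rule finite_subset[of _ "Pow S"]) (use fS in auto)
  have fC: "finite {\<Lambda>. \<Lambda> \<subseteq> S \<and> card \<Lambda> = r}"
    by (rule finite_subset[of _ "Pow S"]) (use fS in auto)
  have fin: "\<Lambda> \<subseteq> S \<Longrightarrow> finite \<Lambda>" for \<Lambda> using fS finite_subset by blast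
  have "(\<Sum>i\<in>S. \<Sum>\<Lambda>'\<in>{\<Lambda>'. \<Lambda>' \<subseteq> S - {i} \<and> card \<Lambda>' = r - 1}. F i \<Lambda>')
      = (\<Sum>p\<in>Sigma S (\<lambda>i. {\<Lambda>'. \<Lambda>' \<subseteq> S - {i} \<and> card \<Lambda>' = r - 1}). F (fst p) (snd p))"
    using fS fB by (subst sum.Sigma) (auto simp: case_prod_beta)
  also have "\<dots> = (\<Sum>p\<in>Sigma {\<Lambda>. \<Lambda> \<subseteq> S \<and> card \<Lambda> = r} (\<lambda>\<Lambda>. \<Lambda>). F (snd p) (fst p - {snd p}))"
  proof (rule sum.reindex_bij_witness[of _ "\<lambda>(\<Lambda>, i). (i, \<Lambda> - {i})" "\<lambda>(i, \<Lambda>'). (insert i \<Lambda>', i)"])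
    fix a assume a: "a \<in> Sigma S (\<lambda>i. {\<Lambda>'. \<Lambda>' \<subseteq> S - {i} \<and> card \<Lambda>' = r - 1})"
    then obtain i L where aa: "a = (i, L)" "i \<in> S" "L \<subseteq> S - {i}" "card L = r - 1" by auto
    have "finite L" using aa fin by blast
    moreover have "i \<notin> L" using aa by auto
    ultimately show "(case case a of (i, \<Lambda>') \<Rightarrow> (insert i \<Lambda>', i) of (\<Lambda>, i) \<Rightarrow> (i, \<Lambda> - {i})) = a"
      "(case a of (i, \<Lambda>') \<Rightarrow> (insert i \<Lambda>', i)) \<in> Sigma {\<Lambda>. \<Lambda> \<subseteq> S \<and> card \<Lambda> = r} (\<lambda>\<Lambda>. \<Lambda>)"
      "F (snd (case a of (i, \<Lambda>') \<Rightarrow> (insert i \<Lambda>', i))) (fst (case a of (i, \<Lambda>') \<Rightarrow> (insert i \<Lambda>', i)) - {snd (case a of (i, \<Lambda>') \<Rightarrow> (insert i \<Lambda>', i))}) = F (fst a) (snd a)"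
      using aa r by (auto simp: card_insert_disjoint)
  next
    fix b assume b: "b \<in> Sigma {\<Lambda>. \<Lambda> \<subseteq> S \<and> card \<Lambda> = r} (\<lambda>\<Lambda>. \<Lambda>)"
    then obtain L i where bb: "b = (L, i)" "L \<subseteq> S" "card L = r" "i \<in> L" by auto
    have "finite L" using bb fin by blast
    then show "(case case b of (\<Lambda>, i) \<Rightarrow> (i, \<Lambda> - {i}) of (i, \<Lambda>') \<Rightarrow> (insert i \<Lambda>', i)) = b"
      "(case b of (\<Lambda>, i) \<Rightarrow> (i, \<Lambda> - {i})) \<in> Sigma S (\<lambda>i. {\<Lambda>'. \<Lambda>' \<subseteq> S - {i} \<and> card \<Lambda>' = r - 1})"
      using bb by (auto simp: insert_absorb)
  qed
  also have "\<dots> = (\<Sum>\<Lambda>\<in>{\<Lambda>. \<Lambda> \<subseteq> S \<and> card \<Lambda> = r}. \<Sum>i\<in>\<Lambda>. F i (\<Lambda> - {i}))"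
    using fC fin by (subst sum.Sigma) (auto simp: case_prod_beta)
  finally show ?thesis .
qed
theorem mainTheorem1:
  fixes emb :: "'k::field_char_0 \<Rightarrow> 'a::ring_1"
    and q :: 'k and x :: "nat \<Rightarrow> nat \<Rightarrow> 'a" and n d r :: nat
    and I J :: "nat list"
  assumes "q \<noteq> 0" and "\<forall>m::nat. m > 0 \<longrightarrow> q ^ m \<noteq> 1"
    and "is_algebra_emb emb"
    and "q_generic emb q x n d"
    and "1 \<le> r" and "r \<le> d"
    and "sorted_wrt (<) I" and "length I = d + r" and "set I \<subseteq> {1..n}"
    and "length J = d - r" and "set J \<subseteq> {1..n}"
  shows
   "(\<Sum>s = 1..d + r.
       let Is = take (s - 1) I @ drop s I; is = I ! (s - 1) in
       emb ((- q) powi (2 * (int r - 1) - int (ninv (Is @ [is])))) *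
       (\<Sum>\<Lambda>' \<in> {\<Lambda>'. \<Lambda>' \<subseteq> set Is \<and> card \<Lambda>' = r - 1}.
          emb ((- q) powi (- int (ninv (sorted_list_of_set (set Is - \<Lambda>') @ sorted_list_of_set \<Lambda>'))))
          * qminor emb q x (sorted_list_of_set (set Is - \<Lambda>'))
          * qminor emb q x (sorted_list_of_set \<Lambda>' @ [is] @ J)))
    = emb (\<Sum>t<r. q ^ (2 * t)) *
       (\<Sum>\<Lambda> \<in> {\<Lambda>. \<Lambda> \<subseteq> set I \<and> card \<Lambda> = r}.
          emb ((- q) powi (- int (ninv (sorted_list_of_set (set I - \<Lambda>) @ sorted_list_of_set \<Lambda>))))
          * qminor emb q x (sorted_list_of_set (set I - \<Lambda>))
          * qminor emb q x (sorted_list_of_set \<Lambda> @ J))"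
proof -
  note emb = assms(3) and qg = assms(4) and q0 = assms(1)
  define S where "S = set I"
  have fS: "finite S" by (simp add: S_def)
  have dI: "distinct I" using assms(7) by (simp add: strict_sorted_iff)
  have cS: "card S = d + r" using dI assms(8) by (simp add: S_def distinct_card)
  have Sn: "S \<subseteq> {1..n}" using assms(9) by (simp add: S_def)
  define G where "G i = emb ((- q) powi (2 * (int r - 1) - int (ninv (sorted_list_of_set (S - {i}) @ [i])))) *
       (\<Sum>\<Lambda>' \<in> {\<Lambda>'. \<Lambda>' \<subseteq> S - {i} \<and> card \<Lambda>' = r - 1}.
          emb ((- q) powi (- int (ninv (sorted_list_of_set (S - {i} - \<Lambda>') @ sorted_list_of_set \<Lambda>'))))
          * qminor emb q x (sorted_list_of_set (S - {i} - \<Lambda>'))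
          * qminor emb q x (sorted_list_of_set \<Lambda>' @ [i] @ J))" for i
  define F where "F i \<Lambda>' = emb ((- q) powi (2 * (int r - 1) - int (ninv (sorted_list_of_set (S - {i}) @ [i])))) *
          (emb ((- q) powi (- int (ninv (sorted_list_of_set (S - {i} - \<Lambda>') @ sorted_list_of_set \<Lambda>'))))
          * qminor emb q x (sorted_list_of_set (S - {i} - \<Lambda>'))
          * qminor emb q x (sorted_list_of_set \<Lambda>' @ [i] @ J))" for i \<Lambda>'
  define \<delta> where "\<delta> \<Lambda> = (- q) powi (- int (ninv (sorted_list_of_set (S - \<Lambda>) @ sorted_list_of_set \<Lambda>)))" for \<Lambda>
  define Q where "Q \<Lambda> = qminor emb q x (sorted_list_of_set (S - \<Lambda>)) * qminor emb q x (sorted_list_of_set \<Lambda> @ J)" for \<Lambda>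
  have iv: "{1..d + r} = {Suc 0..length I}" using assms(8) by simp
  have step1: "(\<Sum>s = 1..d + r.
       let Is = take (s - 1) I @ drop s I; is = I ! (s - 1) in
       emb ((- q) powi (2 * (int r - 1) - int (ninv (Is @ [is])))) *
       (\<Sum>\<Lambda>' \<in> {\<Lambda>'. \<Lambda>' \<subseteq> set Is \<and> card \<Lambda>' = r - 1}.
          emb ((- q) powi (- int (ninv (sorted_list_of_set (set Is - \<Lambda>') @ sorted_list_of_set \<Lambda>'))))
          * qminor emb q x (sorted_list_of_set (set Is - \<Lambda>'))
          * qminor emb q x (sorted_list_of_set \<Lambda>' @ [is] @ J))) = (\<Sum>k<length I. G (I ! k))"
    unfolding iv sum.atLeast1_atMost_eq
  proof (rule sum.cong[OF refl])
    fix k assume k: "k \<in> {..<length I}"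
    have e: "take k I @ drop (Suc k) I = sorted_list_of_set (S - {I ! k})"
      unfolding S_def using Is_eq[OF assms(7)] k by simp
    have e2: "set (sorted_list_of_set (S - {I ! k})) = S - {I ! k}" using fS by simp
    show "(let Is = take (Suc k - 1) I @ drop (Suc k) I; is = I ! (Suc k - 1) in
       emb ((- q) powi (2 * (int r - 1) - int (ninv (Is @ [is])))) *
       (\<Sum>\<Lambda>' \<in> {\<Lambda>'. \<Lambda>' \<subseteq> set Is \<and> card \<Lambda>' = r - 1}.
          emb ((- q) powi (- int (ninv (sorted_list_of_set (set Is - \<Lambda>') @ sorted_list_of_set \<Lambda>'))))
          * qminor emb q x (sorted_list_of_set (set Is - \<Lambda>'))
          * qminor emb q x (sorted_list_of_set \<Lambda>' @ [is] @ J))) = G (I ! k)"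
      unfolding Let_def G_def by (simp only: diff_Suc_1 e e2)
  qed
  have step2: "(\<Sum>k<length I. G (I ! k)) = (\<Sum>i\<in>S. G i)"
    unfolding S_def by (rule sum.reindex_bij_betw) (rule bij_betw_nth[OF dI refl refl])
  have step3: "(\<Sum>i\<in>S. G i) = (\<Sum>\<Lambda>\<in>{\<Lambda>. \<Lambda> \<subseteq> S \<and> card \<Lambda> = r}. \<Sum>i\<in>\<Lambda>. F i (\<Lambda> - {i}))"
    unfolding G_def sum_distrib_left F_def[symmetric] by (rule swap_sums[OF fS assms(5)])
  have step4: "(\<Sum>i\<in>\<Lambda>. F i (\<Lambda> - {i})) = emb ((\<Sum>t<r. q ^ (2 * t)) * \<delta> \<Lambda>) * Q \<Lambda>"
    if L: "\<Lambda> \<in> {\<Lambda>. \<Lambda> \<subseteq> S \<and> card \<Lambda> = r}" for \<Lambda>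
  proof -
    have fL: "finite \<Lambda>" using L fS finite_subset by auto
    have "(\<Sum>i\<in>\<Lambda>. F i (\<Lambda> - {i})) = (\<Sum>i\<in>\<Lambda>. emb (q ^ (2 * card {y \<in> \<Lambda>. y < i}) * \<delta> \<Lambda>) * Q \<Lambda>)"
      unfolding F_def \<delta>_def Q_def
      by (rule sum.cong[OF refl], rule point[OF emb qg q0 fS Sn _ _ _ cS assms(10) assms(11) assms(6)]) (use L in auto)
    also have "\<dots> = emb (\<Sum>i\<in>\<Lambda>. q ^ (2 * card {y \<in> \<Lambda>. y < i}) * \<delta> \<Lambda>) * Q \<Lambda>"
      by (simp only: emb_sum[OF emb] sum_distrib_right)
    also have "(\<Sum>i\<in>\<Lambda>. q ^ (2 * card {y \<in> \<Lambda>. y < i}) * \<delta> \<Lambda>) = (\<Sum>t<r. q ^ (2 * t)) * \<delta> \<Lambda>"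
      unfolding sum_distrib_right[symmetric] using h_sum[OF fL, of r "\<lambda>t. q ^ (2 * t)"] L by simp
    finally show ?thesis .
  qed
  have step5: "emb (\<Sum>t<r. q ^ (2 * t)) *
       (\<Sum>\<Lambda> \<in> {\<Lambda>. \<Lambda> \<subseteq> set I \<and> card \<Lambda> = r}.
          emb ((- q) powi (- int (ninv (sorted_list_of_set (set I - \<Lambda>) @ sorted_list_of_set \<Lambda>))))
          * qminor emb q x (sorted_list_of_set (set I - \<Lambda>))
          * qminor emb q x (sorted_list_of_set \<Lambda> @ J))
     = (\<Sum>\<Lambda>\<in>{\<Lambda>. \<Lambda> \<subseteq> S \<and> card \<Lambda> = r}. emb ((\<Sum>t<r. q ^ (2 * t)) * \<delta> \<Lambda>) * Q \<Lambda>)"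
    unfolding sum_distrib_left S_def[symmetric] \<delta>_def Q_def
    by (simp only: emb_props[OF emb] mult.assoc)
  show ?thesis
    unfolding step1 step2 step3 step5 using step4 by (intro sum.cong refl) auto
qed

end
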